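(* $\operatorname{LLPO}\le_{\mathrm{sW}}\operatorname{Proj}_\mathbb{R}$.
   Context: Represented spaces: a representation of a set $X$ is a partial surjection $\delta_X:\subseteq\mathbb{N}^\mathbb{N}\to X$. For a partial multi-valued function $f:\subseteq X\rightrightarrows Y$, a realizer is a partial $F:\subseteq\mathbb{N}^\mathbb{N}\to\mathbb{N}^\mathbb{N}$ with $\delta_Y(F(p))\in f(\delta_X(p))$ for all $p$ with $\delta_X(p)\in\mathrm{dom}(f)$. Strong Weihrauch reducibility $f\le_{\mathrm{sW}}g$: there are computable partial $H,K:\subseteq\mathbb{N}^\mathbb{N}\to\mathbb{N}^\mathbb{N}$ with $H\circ G\circ K$ a realizer of $f$ for every realizer $G$ of $g$. $\operatorname{LLPO}:\subseteq\mathbb{N}^\mathbb{N}\times\mathbb{N}^\mathbb{N}\rightrightarrows\{0,1\}$: its domain consists of pairs $(p_0,p_1)$ such that there is at most one pair $(j,m)$ with $p_j(m)\ne0$, and $i\in\operatorname{LLPO}(p_0,p_1)$ iff $p_i=0^\mathbb{N}$. $\mathbb{R}$ has the Cauchy representation. $\mathcal{A}(\mathbb{R})$: closed subsets of $\mathbb{R}$ with total information, a name of $A$ consisting of an enumeration of rational open intervals whose union is $\mathbb{R}\setminus A$ together with an enumeration of exactly the rational open intervals meeting $A$. $\operatorname{Proj}_\mathbb{R}:\subseteq\mathbb{R}\times\mathcal{A}(\mathbb{R})\rightrightarrows\mathbb{R}$ maps $(x,A)$ with $A$ nonempty closed to the set of $y\in A$ with $|x-y|=d(x,A)$. *)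

theory Defs
  imports "HOL-Analysis.Analysis" "HOL-Library.Nat_Bijection"
begin

type_synonym baire = "nat \<Rightarrow> nat"

definition prefix :: "baire \<Rightarrow> nat \<Rightarrow> nat list" where
  "prefix p n = map p [0..<n]"

inductive prim_rec :: "nat \<Rightarrow> (nat list \<Rightarrow> nat) \<Rightarrow> bool" where
  pr_zero: "prim_rec n (\<lambda>_. 0)"
| pr_succ: "prim_rec 1 (\<lambda>xs. Suc (hd xs))"
| pr_proj: "i < n \<Longrightarrow> prim_rec n (\<lambda>xs. xs ! i)"
| pr_comp: "prim_rec m f \<Longrightarrow> length gs = m \<Longrightarrow> (\<forall>g\<in>set gs. prim_rec n g)
            \<Longrightarrow> prim_rec n (\<lambda>xs. f (map (\<lambda>g. g xs) gs))"
| pr_rec: "prim_rec n f \<Longrightarrow> prim_rec (Suc (Suc n)) g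
            \<Longrightarrow> prim_rec (Suc n) (\<lambda>xs. rec_nat (f (tl xs)) (\<lambda>k r. g (r # k # tl xs)) (hd xs))"

definition prim_rec1 :: "(nat \<Rightarrow> nat) \<Rightarrow> bool" where
  "prim_rec1 h \<longleftrightarrow> (\<exists>f. prim_rec 1 f \<and> (\<forall>x. h x = f [x]))"

text \<open>A monotone machine: from an input prefix (coded with list_encode) it computes the
  output produced so far (coded with list_encode).\<close>

definition machine_out :: "(nat \<Rightarrow> nat) \<Rightarrow> nat list \<Rightarrow> nat list" where
  "machine_out M w = list_decode (M (list_encode w))"

definition machine_total_on :: "(nat \<Rightarrow> nat) \<Rightarrow> baire \<Rightarrow> bool" where
  "machine_total_on M p \<longleftrightarrow> (\<forall>k. \<exists>n. k < length (machine_out M (prefix p n)))"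

definition machine_result :: "(nat \<Rightarrow> nat) \<Rightarrow> baire \<Rightarrow> baire" where
  "machine_result M p = (\<lambda>k. machine_out M (prefix p (LEAST n. k < length (machine_out M (prefix p n)))) ! k)"

definition computable_partial :: "(baire \<Rightarrow> baire option) \<Rightarrow> bool" where
  "computable_partial F \<longleftrightarrow>
     (\<exists>M. prim_rec1 M
        \<and> (\<forall>v w. (\<exists>u. w = v @ u) \<longrightarrow> (\<exists>u. machine_out M w = machine_out M v @ u))
        \<and> (\<forall>p q. F p = Some q \<longrightarrow> machine_total_on M p \<and> machine_result M p = q))"

text \<open>A representation of X is a partial map baire \<Rightarrow> 'a option (surjectivity is not
  needed in the definition of reducibility).  A partial multi-valued function is
  f :: 'a \<Rightarrow> 'b set with dom f = {x. f x \<noteq> {}}.\<close>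

definition realizer :: "(baire \<Rightarrow> 'a option) \<Rightarrow> (baire \<Rightarrow> 'b option) \<Rightarrow> ('a \<Rightarrow> 'b set)
                         \<Rightarrow> (baire \<Rightarrow> baire option) \<Rightarrow> bool" where
  "realizer dX dY f G \<longleftrightarrow>
     (\<forall>p x. dX p = Some x \<and> f x \<noteq> {} \<longrightarrow>
        (\<exists>q y. G p = Some q \<and> dY q = Some y \<and> y \<in> f x))"

definition sW_reducible ::
  "(baire \<Rightarrow> 'a option) \<Rightarrow> (baire \<Rightarrow> 'b option) \<Rightarrow> ('a \<Rightarrow> 'b set) \<Rightarrow>
   (baire \<Rightarrow> 'c option) \<Rightarrow> (baire \<Rightarrow> 'd option) \<Rightarrow> ('c \<Rightarrow> 'd set) \<Rightarrow> bool" where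
  "sW_reducible dX dY f dZ dW g \<longleftrightarrow>
     (\<exists>H K. computable_partial H \<and> computable_partial K \<and>
        (\<forall>G. realizer dZ dW g G \<longrightarrow>
              realizer dX dY f (\<lambda>p. Option.bind (K p) (\<lambda>r. Option.bind (G r) H))))"

definition rep_baire :: "baire \<Rightarrow> baire option" where
  "rep_baire p = Some p"

definition rep_nat :: "baire \<Rightarrow> nat option" where
  "rep_nat p = Some (p 0)"

definition seq_even :: "baire \<Rightarrow> baire" where "seq_even p = (\<lambda>n. p (2 * n))"
definition seq_odd :: "baire \<Rightarrow> baire" where "seq_odd p = (\<lambda>n. p (2 * n + 1))"

definition rep_prod :: "(baire \<Rightarrow> 'a option) \<Rightarrow> (baire \<Rightarrow> 'b option) \<Rightarrow> baire \<Rightarrow> ('a \<times> 'b) option" where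
  "rep_prod d1 d2 p =
     (case (d1 (seq_even p), d2 (seq_odd p)) of (Some a, Some b) \<Rightarrow> Some (a, b) | _ \<Rightarrow> None)"

definition nuQ :: "nat \<Rightarrow> real" where
  "nuQ n = (case prod_decode n of (i, j) \<Rightarrow> of_int (int_decode i) / of_nat (Suc j))"

definition cauchy_name :: "baire \<Rightarrow> real \<Rightarrow> bool" where
  "cauchy_name p x \<longleftrightarrow> (\<forall>n. \<bar>nuQ (p n) - x\<bar> \<le> (1/2) ^ n)"

definition cauchy_rep :: "baire \<Rightarrow> real option" where
  "cauchy_rep p = (if \<exists>x. cauchy_name p x then Some (THE x. cauchy_name p x) else None)"

definition rat_interval :: "nat \<Rightarrow> real set" where
  "rat_interval k = (case prod_decode k of (a, b) \<Rightarrow> {nuQ a <..< nuQ b})"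

text \<open>Enumerations: value 0 means "nothing", value k+1 enumerates interval number k.
  A name of A is a pair (even/odd components) of an enumeration of intervals with union
  the complement of A and an enumeration of exactly the intervals meeting A.\<close>
definition closed_name :: "baire \<Rightarrow> real set \<Rightarrow> bool" where
  "closed_name p A \<longleftrightarrow>
     closed A \<and>
     \<Union>{rat_interval k | k. \<exists>n. seq_even p n = Suc k} = - A \<and>
     {k. \<exists>n. seq_odd p n = Suc k} = {k. rat_interval k \<inter> A \<noteq> {}}"

definition rep_closed :: "baire \<Rightarrow> real set option" where
  "rep_closed p = (if \<exists>A. closed_name p A then Some (THE A. closed_name p A) else None)"

definition at_most_one_nonzero :: "baire \<Rightarrow> baire \<Rightarrow> bool" where
  "at_most_one_nonzero p0 p1 \<longleftrightarrow>
     (\<forall>j m j' m'. j \<le> (1::nat) \<and> j' \<le> 1 \<and> (if j = 0 then p0 else p1) m \<noteq> 0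
        \<and> (if j' = 0 then p0 else p1) m' \<noteq> 0 \<longrightarrow> j = j' \<and> m = m')"

definition LLPO :: "baire \<times> baire \<Rightarrow> nat set" where
  "LLPO pq = (case pq of (p0, p1) \<Rightarrow>
     (if at_most_one_nonzero p0 p1 then {i. i \<le> 1 \<and> (if i = 0 then p0 else p1) = (\<lambda>_. 0)} else {}))"

definition Proj_R :: "real \<times> real set \<Rightarrow> real set" where
  "Proj_R xA = (case xA of (x, A) \<Rightarrow>
     (if closed A \<and> A \<noteq> {} then {y \<in> A. \<bar>x - y\<bar> = infdist x A} else {}))"

end

theory Submission
  imports Defs
begin


definition PRF :: "nat \<Rightarrow> (nat list \<Rightarrow> nat) \<Rightarrow> bool" where
  "PRF n h \<longleftrightarrow> (\<exists>f. prim_rec n f \<and> (\<forall>xs. length xs = n \<longrightarrow> f xs = h xs))"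

lemma PRF_cong: "PRF n f \<Longrightarrow> (\<And>xs. length xs = n \<Longrightarrow> f xs = g xs) \<Longrightarrow> PRF n g"
  unfolding PRF_def by auto

lemma PRF_proj: "i < n \<Longrightarrow> PRF n (\<lambda>xs. xs ! i)"
  unfolding PRF_def using pr_proj by blast

lemma PRF_list:
  "\<forall>g\<in>set gs. PRF n g \<Longrightarrow> \<exists>fs. length fs = length gs \<and> (\<forall>f\<in>set fs. prim_rec n f) \<and>
     (\<forall>xs. length xs = n \<longrightarrow> map (\<lambda>f. f xs) fs = map (\<lambda>g. g xs) gs)"
proof (induction gs)
  case Nil then show ?case by auto
next
  case (Cons g gs)
  then obtain fs where fs: "length fs = length gs" "\<forall>f\<in>set fs. prim_rec n f"
     "\<forall>xs. length xs = n \<longrightarrow> map (\<lambda>f. f xs) fs = map (\<lambda>g. g xs) gs" by auto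
  from Cons.prems obtain f where "prim_rec n f" "\<forall>xs. length xs = n \<longrightarrow> f xs = g xs"
    unfolding PRF_def by auto
  with fs show ?case by (intro exI[of _ "f # fs"]) auto
qed

lemma PRF_comp:
  assumes "PRF m F" "length gs = m" "\<forall>g\<in>set gs. PRF n g"
  shows "PRF n (\<lambda>xs. F (map (\<lambda>g. g xs) gs))"
proof -
  obtain fF where fF: "prim_rec m fF" "\<forall>xs. length xs = m \<longrightarrow> fF xs = F xs"
    using assms(1) unfolding PRF_def by auto
  obtain fs where fs: "length fs = length gs" "\<forall>f\<in>set fs. prim_rec n f"
     "\<forall>xs. length xs = n \<longrightarrow> map (\<lambda>f. f xs) fs = map (\<lambda>g. g xs) gs"
    using PRF_list[OF assms(3)] by auto
  have "prim_rec n (\<lambda>xs. fF (map (\<lambda>g. g xs) fs))"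
    by (rule pr_comp) (use fF fs assms in auto)
  moreover have "\<forall>xs. length xs = n \<longrightarrow> fF (map (\<lambda>g. g xs) fs) = F (map (\<lambda>g. g xs) gs)"
  proof (intro allI impI)
    fix xs :: "nat list" assume l: "length xs = n"
    then have "map (\<lambda>g. g xs) fs = map (\<lambda>g. g xs) gs" using fs(3) by blast
    then show "fF (map (\<lambda>g. g xs) fs) = F (map (\<lambda>g. g xs) gs)" using fF(2) assms(2) by simp
  qed
  ultimately show ?thesis unfolding PRF_def by blast
qed

lemma PRF_zero: "PRF n (\<lambda>xs. 0)"
  unfolding PRF_def using pr_zero by blast

lemma PRF_succ1: "PRF 1 (\<lambda>xs. Suc (xs ! 0))"
  unfolding PRF_def using pr_succ by (intro exI[of _ "\<lambda>xs. Suc (hd xs)"]) (auto simp: length_Suc_conv)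

lemma PRF_app1:
  assumes "PRF 1 (\<lambda>xs. h (xs ! 0))" "PRF n g"
  shows "PRF n (\<lambda>xs. h (g xs))"
  using PRF_comp[OF assms(1), of "[g]" n] assms(2) by simp

lemma PRF_app2:
  assumes "PRF 2 (\<lambda>xs. h (xs ! 0) (xs ! 1))" "PRF n g1" "PRF n g2"
  shows "PRF n (\<lambda>xs. h (g1 xs) (g2 xs))"
  using PRF_comp[OF assms(1), of "[g1,g2]" n] assms(2,3) by simp

lemma PRF_app3:
  assumes "PRF 3 (\<lambda>xs. h (xs ! 0) (xs ! 1) (xs ! 2))" "PRF n g1" "PRF n g2" "PRF n g3"
  shows "PRF n (\<lambda>xs. h (g1 xs) (g2 xs) (g3 xs))"
  using PRF_comp[OF assms(1), of "[g1,g2,g3]" n] assms(2,3,4) by (simp add: numeral_3_eq_3)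

lemma PRF_Suc: "PRF n g \<Longrightarrow> PRF n (\<lambda>xs. Suc (g xs))"
  by (rule PRF_app1[OF PRF_succ1])

lemma PRF_const: "PRF n (\<lambda>xs. c)"
  by (induction c) (auto intro: PRF_zero PRF_Suc)

lemma PRF_rec1:
  assumes "PRF 2 (\<lambda>ys. b (ys ! 0) (ys ! 1))"
  shows "PRF 1 (\<lambda>xs. rec_nat a (\<lambda>k r. b r k) (xs ! 0))"
proof -
  obtain f where f: "prim_rec 0 f" "\<forall>xs. length xs = 0 \<longrightarrow> f xs = a"
    using PRF_const[of 0 a] unfolding PRF_def by auto
  obtain g where g: "prim_rec 2 g" "\<forall>xs. length xs = 2 \<longrightarrow> g xs = b (xs!0) (xs!1)"
    using assms unfolding PRF_def by auto
  have "prim_rec (Suc 0) (\<lambda>xs. rec_nat (f (tl xs)) (\<lambda>k r. g (r # k # tl xs)) (hd xs))"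
    using pr_rec[OF f(1)] g(1) by (simp add: numeral_2_eq_2)
  moreover have "rec_nat (f (tl xs)) (\<lambda>k r. g (r # k # tl xs)) (hd xs) = rec_nat a (\<lambda>k r. b r k) (xs ! 0)"
    if "length xs = 1" for xs
  proof -
    from that obtain x where xs: "xs = [x]" by (auto simp: length_Suc_conv)
    have "rec_nat a (\<lambda>k r. g [r, k]) x = rec_nat a (\<lambda>k r. b r k) x"
      by (induction x) (auto simp: g(2))
    then show ?thesis using f(2) xs by simp
  qed
  ultimately show ?thesis unfolding PRF_def One_nat_def[symmetric] Suc_1 by blast
qed

lemma PRF_rec2:
  assumes "PRF 1 (\<lambda>xs. a (xs ! 0))" "PRF 3 (\<lambda>ys. b (ys ! 0) (ys ! 1) (ys ! 2))"
  shows "PRF 2 (\<lambda>xs. rec_nat (a (xs ! 1)) (\<lambda>k r. b r k (xs ! 1)) (xs ! 0))"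
proof -
  obtain f where f: "prim_rec 1 f" "\<forall>xs. length xs = 1 \<longrightarrow> f xs = a (xs!0)"
    using assms unfolding PRF_def by auto
  obtain g where g: "prim_rec 3 g" "\<forall>xs. length xs = 3 \<longrightarrow> g xs = b (xs!0) (xs!1) (xs!2)"
    using assms unfolding PRF_def by auto
  have "prim_rec (Suc 1) (\<lambda>xs. rec_nat (f (tl xs)) (\<lambda>k r. g (r # k # tl xs)) (hd xs))"
    using pr_rec[OF f(1)] g(1) by (simp add: numeral_3_eq_3)
  moreover have "rec_nat (f (tl xs)) (\<lambda>k r. g (r # k # tl xs)) (hd xs) = rec_nat (a (xs ! 1)) (\<lambda>k r. b r k (xs ! 1)) (xs ! 0)"
    if "length xs = 2" for xs
  proof -
    from that obtain x y where xs: "xs = [x, y]" by (auto simp: length_Suc_conv numeral_2_eq_2)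
    have "rec_nat (a y) (\<lambda>k r. g [r, k, y]) x = rec_nat (a y) (\<lambda>k r. b r k y) x"
      by (induction x) (auto simp: g(2))
    then show ?thesis using f(2) xs by simp
  qed
  ultimately show ?thesis unfolding PRF_def One_nat_def[symmetric] Suc_1 by blast
qed

lemmas PRF_base = PRF_proj PRF_const PRF_Suc

lemma PRF_recA: assumes "PRF 2 B" shows "PRF 1 (\<lambda>xs. rec_nat a (\<lambda>k r. B [r, k]) (xs ! 0))"
proof -
  have "PRF 2 (\<lambda>ys. B [ys ! 0, ys ! 1])"
    using assms by (rule PRF_cong) (auto simp: length_Suc_conv numeral_2_eq_2)
  from PRF_rec1[where b="\<lambda>r k. B [r, k]", OF this] show ?thesis .
qed

lemma PRF_recB: assumes "PRF 1 A" "PRF 3 B"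
  shows "PRF 2 (\<lambda>xs. rec_nat (A [xs ! 1]) (\<lambda>k r. B [r, k, xs ! 1]) (xs ! 0))"
proof -
  have 1: "PRF 1 (\<lambda>ys. A [ys ! 0])"
    using assms(1) by (rule PRF_cong) (auto simp: length_Suc_conv)
  have 2: "PRF 3 (\<lambda>ys. B [ys ! 0, ys ! 1, ys ! 2])"
    using assms(2) by (rule PRF_cong) (auto simp: length_Suc_conv numeral_3_eq_3)
  from PRF_rec2[where a="\<lambda>z. A [z]" and b="\<lambda>r k y. B [r, k, y]", OF 1 2] show ?thesis .
qed

lemma PRF_add: assumes "PRF n g1" "PRF n g2" shows "PRF n (\<lambda>xs. g1 xs + g2 xs)"
proof -
  have p1: "PRF 1 (\<lambda>xs. xs!0)" by (intro PRF_base) simp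
  have p2: "PRF 3 (\<lambda>ys. Suc (ys!0))" by (intro PRF_base) simp
  have "PRF 2 (\<lambda>xs. rec_nat (xs ! 1) (\<lambda>k r. Suc r) (xs ! 0))"
    using PRF_recB[OF p1 p2] by simp
  moreover have "rec_nat y (\<lambda>k r. Suc r) x = x + y" for x y :: nat by (induction x) auto
  ultimately have "PRF 2 (\<lambda>xs. xs ! 0 + xs ! 1)" by simp
  from PRF_app2[where h="(+)", OF this assms] show ?thesis .
qed

lemma PRF_mult: assumes "PRF n g1" "PRF n g2" shows "PRF n (\<lambda>xs. g1 xs * g2 xs)"
proof -
  have p1: "PRF 1 (\<lambda>xs. 0)" by (intro PRF_base)
  have p2: "PRF 3 (\<lambda>ys. ys!0 + ys!2)" by (intro PRF_base PRF_add) simp_all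
  have "PRF 2 (\<lambda>xs. rec_nat 0 (\<lambda>k r. r + xs ! 1) (xs ! 0))"
    using PRF_recB[OF p1 p2] by simp
  moreover have "rec_nat 0 (\<lambda>k r. r + y) x = x * y" for x y :: nat by (induction x) auto
  ultimately have "PRF 2 (\<lambda>xs. xs ! 0 * xs ! 1)" by simp
  from PRF_app2[where h="(*)", OF this assms] show ?thesis .
qed

lemma PRF_pred: assumes "PRF n g" shows "PRF n (\<lambda>xs. g xs - 1)"
proof -
  have p2: "PRF 2 (\<lambda>ys. ys!1)" by (intro PRF_base) simp
  have "PRF 1 (\<lambda>xs. rec_nat 0 (\<lambda>k r. k) (xs ! 0))"
    using PRF_recA[OF p2] by simp
  moreover have "rec_nat 0 (\<lambda>k r. k) x = x - 1" for x :: nat by (cases x) auto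
  ultimately have "PRF 1 (\<lambda>xs. xs ! 0 - 1)" by simp
  from PRF_app1[where h="\<lambda>x. x - 1", OF this assms] show ?thesis .
qed

lemma PRF_sub: assumes "PRF n g1" "PRF n g2" shows "PRF n (\<lambda>xs. g1 xs - g2 xs)"
proof -
  have p1: "PRF 1 (\<lambda>xs. xs!0)" by (intro PRF_base) simp
  have p2: "PRF 3 (\<lambda>ys. ys!0 - 1)" by (intro PRF_base PRF_pred) simp
  have "PRF 2 (\<lambda>xs. rec_nat (xs ! 1) (\<lambda>k r. r - 1) (xs ! 0))"
    using PRF_recB[OF p1 p2] by simp
  moreover have "rec_nat y (\<lambda>k r. r - 1) x = y - x" for x y :: nat by (induction x) auto
  ultimately have "PRF 2 (\<lambda>xs. xs ! 1 - xs ! 0)" by simp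
  from PRF_app2[where h="\<lambda>u v. v - u", OF this assms(2,1)] show ?thesis by simp
qed

lemma PRF_if0: assumes "PRF n c" "PRF n a" "PRF n b"
  shows "PRF n (\<lambda>xs. if c xs = 0 then a xs else b xs)"
proof -
  have "PRF n (\<lambda>xs. a xs * (1 - c xs) + b xs * (1 - (1 - c xs)))"
    by (intro PRF_add PRF_mult PRF_sub PRF_const assms)
  then show ?thesis by (rule PRF_cong) auto
qed

lemma PRF_if_le: assumes "PRF n c1" "PRF n c2" "PRF n a" "PRF n b"
  shows "PRF n (\<lambda>xs. if c1 xs \<le> c2 xs then a xs else b xs)"
proof -
  have "PRF n (\<lambda>xs. if c1 xs - c2 xs = 0 then a xs else b xs)"
    by (intro PRF_if0 PRF_sub assms)
  then show ?thesis by (rule PRF_cong) auto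
qed

lemma PRF_if_less: assumes "PRF n c1" "PRF n c2" "PRF n a" "PRF n b"
  shows "PRF n (\<lambda>xs. if c1 xs < c2 xs then a xs else b xs)"
proof -
  have "PRF n (\<lambda>xs. if c2 xs - c1 xs = 0 then b xs else a xs)"
    by (intro PRF_if0 PRF_sub assms)
  then show ?thesis by (rule PRF_cong) auto
qed

lemma PRF_if_eq: assumes "PRF n c1" "PRF n c2" "PRF n a" "PRF n b"
  shows "PRF n (\<lambda>xs. if c1 xs = c2 xs then a xs else b xs)"
proof -
  have "PRF n (\<lambda>xs. if c1 xs - c2 xs + (c2 xs - c1 xs) = 0 then a xs else b xs)"
    by (intro PRF_if0 PRF_sub PRF_add assms)
  then show ?thesis by (rule PRF_cong) auto
qed

lemma PRF_mod2: assumes "PRF n g" shows "PRF n (\<lambda>xs. g xs mod 2)"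
proof -
  have p2: "PRF 2 (\<lambda>ys. 1 - ys!0)" by (intro PRF_base PRF_sub) simp
  have "PRF 1 (\<lambda>xs. rec_nat 0 (\<lambda>k r. 1 - r) (xs ! 0))"
    using PRF_recA[OF p2] by simp
  moreover have "rec_nat 0 (\<lambda>k r. 1 - r) x = x mod 2" for x :: nat by (induction x) (auto simp: mod_Suc)
  ultimately have "PRF 1 (\<lambda>xs. xs ! 0 mod 2)" by simp
  from PRF_app1[where h="\<lambda>x. x mod 2", OF this assms] show ?thesis .
qed

lemma PRF_div2: assumes "PRF n g" shows "PRF n (\<lambda>xs. g xs div 2)"
proof -
  have p2: "PRF 2 (\<lambda>ys. ys!0 + ys!1 mod 2)" by (intro PRF_base PRF_add PRF_mod2) simp_all
  have "PRF 1 (\<lambda>xs. rec_nat 0 (\<lambda>k r. r + k mod 2) (xs ! 0))"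
    using PRF_recA[OF p2] by simp
  moreover have "rec_nat 0 (\<lambda>k r. r + k mod 2) x = x div 2" for x :: nat
    by (induction x) (auto simp: div_Suc mod_Suc)
  ultimately have "PRF 1 (\<lambda>xs. xs ! 0 div 2)" by simp
  from PRF_app1[where h="\<lambda>x. x div 2", OF this assms] show ?thesis .
qed

lemma PRF_if_even: assumes "PRF n c" "PRF n a" "PRF n b"
  shows "PRF n (\<lambda>xs. if even (c xs) then a xs else b xs)"
proof -
  have "PRF n (\<lambda>xs. if c xs mod 2 = 0 then a xs else b xs)"
    by (intro PRF_if0 PRF_mod2 assms)
  then show ?thesis by (rule PRF_cong) auto
qed

lemma PRF_pow2: assumes "PRF n g" shows "PRF n (\<lambda>xs. (2::nat) ^ g xs)"
proof -
  have p2: "PRF 2 (\<lambda>ys. ys!0 + ys!0)" by (intro PRF_base PRF_add) simp_all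
  have "PRF 1 (\<lambda>xs. rec_nat 1 (\<lambda>k r. r + r) (xs ! 0))"
    using PRF_recA[OF p2] by simp
  moreover have "rec_nat 1 (\<lambda>k r. r + r) x = (2::nat) ^ x" for x :: nat by (induction x) auto
  ultimately have "PRF 1 (\<lambda>xs. (2::nat) ^ (xs ! 0))" by simp
  from PRF_app1[where h="\<lambda>x. (2::nat) ^ x", OF this assms] show ?thesis .
qed

lemmas PRF_intros = PRF_proj PRF_const PRF_Suc PRF_add PRF_mult PRF_sub PRF_if0 PRF_if_le PRF_if_less
  PRF_if_eq PRF_mod2 PRF_div2 PRF_if_even PRF_pow2



lemma PRF_tri: assumes "PRF n g" shows "PRF n (\<lambda>xs. triangle (g xs))"
proof -
  have "PRF n (\<lambda>xs. (g xs * Suc (g xs)) div 2)" by (intro PRF_intros assms)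
  then show ?thesis by (simp add: triangle_def)
qed

lemma PRF_pe: assumes "PRF n g1" "PRF n g2" shows "PRF n (\<lambda>xs. prod_encode (g1 xs, g2 xs))"
proof -
  have "PRF n (\<lambda>xs. triangle (g1 xs + g2 xs) + g1 xs)" by (intro PRF_intros PRF_tri assms)
  then show ?thesis by (simp add: prod_encode_def)
qed

definition rt :: "nat \<Rightarrow> nat \<Rightarrow> nat" where
  "rt k n = rec_nat 0 (\<lambda>k r. if triangle (Suc r) \<le> n then Suc r else r) k"

lemma rt_Suc: "rt (Suc k) n = (if triangle (Suc (rt k n)) \<le> n then Suc (rt k n) else rt k n)"
  by (simp add: rt_def)

lemma rt_0: "rt 0 n = 0" by (simp add: rt_def)

lemma triangle_mono: "a \<le> b \<Longrightarrow> triangle a \<le> triangle b"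
  by (induction b) (auto simp: le_Suc_eq)

lemma rt_prop: "triangle (rt k n) \<le> n \<and> (\<forall>t. t \<le> k \<and> triangle t \<le> n \<longrightarrow> t \<le> rt k n)"
proof (induction k)
  case 0 then show ?case by (simp add: rt_0)
next
  case (Suc k)
  show ?case
  proof (cases "triangle (Suc (rt k n)) \<le> n")
    case True
    then show ?thesis using Suc by (auto simp: rt_Suc le_Suc_eq)
  next
    case False
    have "t \<le> rt k n" if "t \<le> Suc k" "triangle t \<le> n" for t
    proof (rule ccontr)
      assume "\<not> t \<le> rt k n"
      then have "Suc (rt k n) \<le> t" by simp
      then have "triangle (Suc (rt k n)) \<le> triangle t"
        by (rule triangle_mono)
      with False that show False by simp
    qed
    then show ?thesis using Suc False by (auto simp: rt_Suc)
  qed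
qed

lemma le_triangle: "t \<le> triangle t"
  by (induction t) auto

definition pd1 :: "nat \<Rightarrow> nat" where "pd1 n = n - triangle (rt n n)"
definition pd2 :: "nat \<Rightarrow> nat" where "pd2 n = rt n n - pd1 n"

lemma prod_decode_pd: "prod_decode n = (pd1 n, pd2 n)"
proof -
  let ?s = "rt n n"
  have a: "triangle ?s \<le> n" using rt_prop by blast
  have b: "n < triangle (Suc ?s)"
  proof (rule ccontr)
    assume "\<not> n < triangle (Suc ?s)"
    then have "triangle (Suc ?s) \<le> n" by simp
    moreover have "Suc ?s \<le> n" using le_triangle[of "Suc ?s"] calculation by linarith
    ultimately have "Suc ?s \<le> ?s" using rt_prop[of n n] by blast
    then show False by simp
  qed
  have le: "pd1 n \<le> ?s" using a b by (simp add: pd1_def)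
  have "prod_encode (pd1 n, pd2 n) = n"
    using le a by (simp add: prod_encode_def pd2_def pd1_def)
  then show ?thesis by (metis prod_encode_inverse)
qed

lemma PRF_rt: assumes "PRF n g" shows "PRF n (\<lambda>xs. rt (g xs) (g xs))"
proof -
  have p1: "PRF 1 (\<lambda>xs. 0)" by (intro PRF_intros)
  have p2: "PRF 3 (\<lambda>ys. if triangle (Suc (ys!0)) \<le> ys!2 then Suc (ys!0) else ys!0)"
    by (intro PRF_intros PRF_tri) simp_all
  have "PRF 2 (\<lambda>xs. rec_nat 0 (\<lambda>k r. if triangle (Suc r) \<le> xs!1 then Suc r else r) (xs ! 0))"
    using PRF_recB[OF p1 p2] by (simp cong: if_cong)
  then have "PRF 2 (\<lambda>xs. rt (xs!0) (xs!1))" by (simp add: rt_def)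
  from PRF_app2[where h=rt, OF this assms assms] show ?thesis .
qed

lemma PRF_fst_pd: assumes "PRF n g" shows "PRF n (\<lambda>xs. fst (prod_decode (g xs)))"
proof -
  have "PRF n (\<lambda>xs. g xs - triangle (rt (g xs) (g xs)))" by (intro PRF_intros PRF_tri PRF_rt assms)
  then show ?thesis by (simp add: prod_decode_pd pd1_def)
qed

lemma PRF_snd_pd: assumes "PRF n g" shows "PRF n (\<lambda>xs. snd (prod_decode (g xs)))"
proof -
  have "PRF n (\<lambda>xs. rt (g xs) (g xs) - (g xs - triangle (rt (g xs) (g xs))))"
    by (intro PRF_intros PRF_tri PRF_rt assms)
  then show ?thesis by (simp add: prod_decode_pd pd1_def pd2_def)
qed

definition tlc :: "nat \<Rightarrow> nat" where "tlc c = snd (prod_decode (c - 1))"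
definition hdc :: "nat \<Rightarrow> nat" where "hdc c = fst (prod_decode (c - 1))"
definition itc :: "nat \<Rightarrow> nat \<Rightarrow> nat" where "itc j c = rec_nat c (\<lambda>k r. tlc r) j"
definition nthc :: "nat \<Rightarrow> nat \<Rightarrow> nat" where "nthc c j = hdc (itc j c)"
definition lenc :: "nat \<Rightarrow> nat" where
  "lenc c = rec_nat 0 (\<lambda>k r. r + (if itc k c = 0 then 0 else 1)) c"

lemma list_encode_0_iff: "list_encode w = 0 \<longleftrightarrow> w = []"
  by (cases w) auto

lemma prod_decode_0: "prod_decode 0 = (0, 0)"
proof -
  have "prod_encode (0, 0) = 0" by (simp add: prod_encode_def)
  then show ?thesis using prod_encode_inverse[of "(0, 0)"] by simp
qed

lemma tlc_code: "tlc (list_encode w) = list_encode (tl w)"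
  by (cases w) (auto simp: tlc_def prod_decode_0)

lemma hdc_code: "w \<noteq> [] \<Longrightarrow> hdc (list_encode w) = hd w"
  by (cases w) (auto simp: hdc_def)

lemma itc_code: "itc j (list_encode w) = list_encode (drop j w)"
  by (induction j) (auto simp: itc_def tlc_code drop_Suc tl_drop)

lemma nthc_code: "j < length w \<Longrightarrow> nthc (list_encode w) j = w ! j"
  by (simp add: nthc_def itc_code hdc_code hd_drop_conv_nth)

lemma length_le_code: "length w \<le> list_encode w"
proof (induction w)
  case (Cons x w) then show ?case using le_prod_encode_2[of "list_encode w" x] by simp
qed simp

lemma lenc_aux: "rec_nat 0 (\<lambda>k r. r + (if itc k (list_encode w) = 0 then 0 else 1)) m = min m (length w)"
  by (induction m) (auto simp: itc_code list_encode_0_iff)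

lemma lenc_code: "lenc (list_encode w) = length w"
  using lenc_aux[of w "list_encode w"] length_le_code[of w] by (simp add: lenc_def)

lemma PRF_itc: assumes "PRF n g1" "PRF n g2" shows "PRF n (\<lambda>xs. itc (g1 xs) (g2 xs))"
proof -
  have p1: "PRF 1 (\<lambda>xs. xs!0)" by (intro PRF_intros) simp
  have p2: "PRF 3 (\<lambda>ys. snd (prod_decode (ys!0 - 1)))" by (intro PRF_intros PRF_snd_pd) simp
  have "PRF 2 (\<lambda>xs. rec_nat (xs!1) (\<lambda>k r. snd (prod_decode (r - 1))) (xs ! 0))"
    using PRF_recB[OF p1 p2] by simp
  then have "PRF 2 (\<lambda>xs. itc (xs!0) (xs!1))" by (simp add: itc_def tlc_def)
  from PRF_app2[where h=itc, OF this assms] show ?thesis .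
qed

lemma PRF_nthc: assumes "PRF n g1" "PRF n g2" shows "PRF n (\<lambda>xs. nthc (g1 xs) (g2 xs))"
proof -
  have "PRF n (\<lambda>xs. fst (prod_decode (itc (g2 xs) (g1 xs) - 1)))"
    by (intro PRF_intros PRF_fst_pd PRF_itc assms)
  then show ?thesis by (simp add: nthc_def hdc_def)
qed

lemma PRF_lenc: assumes "PRF n g" shows "PRF n (\<lambda>xs. lenc (g xs))"
proof -
  have p1: "PRF 1 (\<lambda>xs. 0)" by (intro PRF_intros)
  have p2: "PRF 3 (\<lambda>ys. ys!0 + (if itc (ys!1) (ys!2) = 0 then 0 else 1))"
    by (intro PRF_intros PRF_itc) simp_all
  have "PRF 2 (\<lambda>xs. rec_nat 0 (\<lambda>k r. r + (if itc k (xs!1) = 0 then 0 else 1)) (xs ! 0))"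
    using PRF_recB[OF p1 p2] by simp
  from PRF_app2[where h="\<lambda>a b. rec_nat 0 (\<lambda>k r. r + (if itc k b = 0 then 0 else 1)) a", OF this assms assms]
  show ?thesis by (simp add: lenc_def)
qed



definition Bc :: "(nat \<Rightarrow> nat \<Rightarrow> nat) \<Rightarrow> nat \<Rightarrow> nat \<Rightarrow> nat \<Rightarrow> nat" where
  "Bc Ec L k c = rec_nat 0 (\<lambda>k r. Suc (prod_encode (Ec (L - Suc k) c, r))) k"

lemma Bc_code: "k \<le> L \<Longrightarrow> Bc Ec L k c = list_encode (map (\<lambda>i. Ec i c) [L - k..<L])"
proof (induction k)
  case 0 then show ?case by (simp add: Bc_def)
next
  case (Suc k)
  have "[L - Suc k..<L] = (L - Suc k) # [L - k..<L]"
    using Suc.prems upt_conv_Cons[of "L - Suc k" L] by (simp add: Suc_diff_Suc)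
  then show ?case using Suc by (simp add: Bc_def)
qed

lemma machine_generic:
  fixes E :: "nat \<Rightarrow> (nat \<Rightarrow> nat) \<Rightarrow> nat" and Lf :: "nat \<Rightarrow> nat"
  assumes pr: "PRF 2 (\<lambda>xs. E (xs!0) (nthc (xs!1)))" and prL: "PRF 1 (\<lambda>xs. Lf (xs!0))"
    and loc: "\<And>i f g l. i < Lf l \<Longrightarrow> (\<And>j. j < l \<Longrightarrow> f j = g j) \<Longrightarrow> E i f = E i g"
    and mono: "\<And>a b. a \<le> b \<Longrightarrow> Lf a \<le> Lf b"
  shows "\<exists>M. prim_rec1 M \<and> (\<forall>v w. (\<exists>u. w = v @ u) \<longrightarrow> (\<exists>u. machine_out M w = machine_out M v @ u)) \<and>
          (\<forall>w. machine_out M w = map (\<lambda>i. E i (nth w)) [0..<Lf (length w)])"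
proof -
  define M where "M c = Bc (\<lambda>i c. E i (nthc c)) (Lf (lenc c)) (Lf (lenc c)) c" for c
  have PE: "PRF n (\<lambda>xs. E (g1 xs) (nthc (g2 xs)))" if "PRF n g1" "PRF n g2" for n g1 g2
    using PRF_app2[where h="\<lambda>a b. E a (nthc b)", OF pr that] by simp
  have PL: "PRF n (\<lambda>xs. Lf (g xs))" if "PRF n g" for n g
    using PRF_app1[where h=Lf, OF prL that] .
  have p1: "PRF 1 (\<lambda>xs. 0)" by (intro PRF_intros)
  have p2: "PRF 3 (\<lambda>ys. Suc (prod_encode (E (Lf (lenc (ys!2)) - Suc (ys!1)) (nthc (ys!2)), ys!0)))"
    by (intro PRF_intros PRF_pe PE PL PRF_lenc) simp_all
  have "PRF 2 (\<lambda>xs. rec_nat 0 (\<lambda>k r. Suc (prod_encode (E (Lf (lenc (xs!1)) - Suc k) (nthc (xs!1)), r))) (xs ! 0))"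
    using PRF_recB[OF p1 p2] by simp
  from PRF_app2[where h="\<lambda>a c. rec_nat 0 (\<lambda>k r. Suc (prod_encode (E (Lf (lenc c) - Suc k) (nthc c), r))) a",
     OF this PL[OF PRF_lenc[OF PRF_proj[of 0 1]]] PRF_proj[of 0 1]]
  have "PRF 1 (\<lambda>xs. M (xs ! 0))" by (simp add: M_def Bc_def)
  then obtain f where f: "prim_rec 1 f" "\<forall>xs. length xs = 1 \<longrightarrow> f xs = M (xs ! 0)"
    unfolding PRF_def by blast
  have pr1: "prim_rec1 M" unfolding prim_rec1_def using f by (intro exI[of _ f]) auto
  have out: "machine_out M w = map (\<lambda>i. E i (nth w)) [0..<Lf (length w)]" for w
  proof -
    have "machine_out M w = map (\<lambda>i. E i (nthc (list_encode w))) [0..<Lf (length w)]"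
      by (simp add: machine_out_def M_def lenc_code Bc_code)
    also have "\<dots> = map (\<lambda>i. E i (nth w)) [0..<Lf (length w)]"
      by (rule map_cong[OF refl]) (auto intro!: loc simp: nthc_code)
    finally show ?thesis .
  qed
  have mon: "\<exists>u. machine_out M w = machine_out M v @ u" if "w = v @ u" for v w u
  proof -
    have le: "Lf (length v) \<le> Lf (length w)" using that mono by simp
    have "[0..<Lf (length w)] = [0..<Lf (length v)] @ [Lf (length v)..<Lf (length w)]"
      using le upt_add_eq_append[of 0 "Lf (length v)" "Lf (length w) - Lf (length v)"] by simp
    moreover have "map (\<lambda>i. E i (nth w)) [0..<Lf (length v)] = map (\<lambda>i. E i (nth v)) [0..<Lf (length v)]"
      by (rule map_cong[OF refl]) (auto intro!: loc simp: that nth_append)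
    ultimately show ?thesis by (simp add: out)
  qed
  show ?thesis using pr1 mon out by blast
qed

lemma computable_generic:
  fixes E :: "nat \<Rightarrow> (nat \<Rightarrow> nat) \<Rightarrow> nat" and Lf :: "nat \<Rightarrow> nat"
  assumes pr: "PRF 2 (\<lambda>xs. E (xs!0) (nthc (xs!1)))" and prL: "PRF 1 (\<lambda>xs. Lf (xs!0))"
    and loc: "\<And>i f g l. i < Lf l \<Longrightarrow> (\<And>j. j < l \<Longrightarrow> f j = g j) \<Longrightarrow> E i f = E i g"
    and mono: "\<And>a b. a \<le> b \<Longrightarrow> Lf a \<le> Lf b"
    and unb: "\<And>k. \<exists>n. k < Lf n"
  shows "computable_partial (\<lambda>p. Some (\<lambda>k. E k p))"
proof -
  obtain M where M: "prim_rec1 M" "\<forall>v w. (\<exists>u. w = v @ u) \<longrightarrow> (\<exists>u. machine_out M w = machine_out M v @ u)"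
    "\<forall>w. machine_out M w = map (\<lambda>i. E i (nth w)) [0..<Lf (length w)]"
  proof -
    have ex: "\<exists>M. prim_rec1 M \<and> (\<forall>v w. (\<exists>u. w = v @ u) \<longrightarrow> (\<exists>u. machine_out M w = machine_out M v @ u)) \<and>
          (\<forall>w. machine_out M w = map (\<lambda>i. E i (nth w)) [0..<Lf (length w)])"
      apply (rule machine_generic[where E=E and Lf=Lf])
      apply (rule pr)
      apply (rule prL)
      apply (rule loc, assumption, blast)
      apply (erule mono)
      done
    then show ?thesis using that by blast
  qed
  have pre: "E i (nth (prefix p n)) = E i p" if "i < Lf n" for i p n
    using loc[OF that[unfolded length_map length_upt, folded length_upt]] that
    by (intro loc[of i n]) (auto simp: prefix_def)
  have tot: "machine_total_on M p" for p
    unfolding machine_total_on_def using M(3) unb by (simp add: prefix_def)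
  have res: "machine_result M p = (\<lambda>k. E k p)" for p
  proof
    fix k
    let ?N = "LEAST n. k < length (machine_out M (prefix p n))"
    have "k < length (machine_out M (prefix p ?N))"
      by (rule LeastI_ex) (use tot[of p] in \<open>auto simp: machine_total_on_def\<close>)
    then have kN: "k < Lf ?N" using M(3) by (simp add: prefix_def)
    show "machine_result M p k = E k p"
      unfolding machine_result_def using M(3) kN pre[OF kN] by (simp add: prefix_def)
  qed
  show ?thesis unfolding computable_partial_def using M(1,2) tot res by blast
qed



definition Fs :: "nat \<Rightarrow> (nat \<Rightarrow> nat) \<Rightarrow> nat" where
  "Fs i f = rec_nat 0 (\<lambda>j r. r + (if f j = 0 then 0 else Suc j)) i"

definition cq :: "nat \<Rightarrow> nat" where
  "cq F = (if F = 0 then 0 else prod_encode (if even (F - 1) then 2 else 1, 2 ^ ((F - 1) div 2) - 1))"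

definition ltm1 :: "nat \<Rightarrow> nat" where
  "ltm1 a = (if even (fst (prod_decode a)) then 0
             else if snd (prod_decode a) < fst (prod_decode a) div 2 then 1 else 0)"
definition gtm1 :: "nat \<Rightarrow> nat" where
  "gtm1 b = (if even (fst (prod_decode b)) then 1
             else if fst (prod_decode b) div 2 < snd (prod_decode b) then 1 else 0)"
definition lt1 :: "nat \<Rightarrow> nat" where
  "lt1 a = (if even (fst (prod_decode a)) then (if fst (prod_decode a) div 2 < Suc (snd (prod_decode a)) then 1 else 0) else 1)"
definition gt1 :: "nat \<Rightarrow> nat" where
  "gt1 b = (if even (fst (prod_decode b)) then (if Suc (snd (prod_decode b)) < fst (prod_decode b) div 2 then 1 else 0) else 0)"
definition mt :: "nat \<Rightarrow> nat" where
  "mt k = ltm1 (fst (prod_decode k)) * gtm1 (snd (prod_decode k)) + lt1 (fst (prod_decode k)) * gt1 (snd (prod_decode k))"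

definition EK :: "nat \<Rightarrow> (nat \<Rightarrow> nat) \<Rightarrow> nat" where
  "EK i f = (if even i then cq (Fs i f)
     else if even (i div 2) then (if mt (i div 2 div 2) = 0 then Suc (i div 2 div 2) else 0)
     else (if mt (i div 2 div 2) = 0 then 0 else Suc (i div 2 div 2)))"

definition EH :: "nat \<Rightarrow> (nat \<Rightarrow> nat) \<Rightarrow> nat" where
  "EH i f = (if even (fst (prod_decode (f 1))) then 1 else 0)"

lemmas PRF_all = PRF_intros PRF_pe PRF_fst_pd PRF_snd_pd PRF_nthc PRF_lenc

lemma PRF_Fs: assumes "PRF n g1" "PRF n g2" shows "PRF n (\<lambda>xs. Fs (g1 xs) (nthc (g2 xs)))"
proof -
  have p1: "PRF 1 (\<lambda>xs. 0)" by (intro PRF_intros)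
  have p2: "PRF 3 (\<lambda>ys. ys!0 + (if nthc (ys!2) (ys!1) = 0 then 0 else Suc (ys!1)))"
    by (intro PRF_all) simp_all
  have "PRF 2 (\<lambda>xs. rec_nat 0 (\<lambda>j r. r + (if nthc (xs!1) j = 0 then 0 else Suc j)) (xs ! 0))"
    using PRF_recB[OF p1 p2] by (simp cong: if_cong)
  then have "PRF 2 (\<lambda>xs. Fs (xs!0) (nthc (xs!1)))" by (simp add: Fs_def)
  from PRF_app2[where h="\<lambda>a b. Fs a (nthc b)", OF this assms] show ?thesis by simp
qed

lemma PRF_cq: assumes "PRF n g" shows "PRF n (\<lambda>xs. cq (g xs))"
proof -
  have "PRF n (\<lambda>xs. if g xs = 0 then 0 else prod_encode (if even (g xs - 1) then 2 else 1, 2 ^ ((g xs - 1) div 2) - 1))"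
    by (intro PRF_all assms)
  then show ?thesis by (simp add: cq_def)
qed

lemma PRF_mt: assumes "PRF n g" shows "PRF n (\<lambda>xs. mt (g xs))"
proof -
  have "PRF n (\<lambda>xs.
    (if even (fst (prod_decode (fst (prod_decode (g xs))))) then 0
             else if snd (prod_decode (fst (prod_decode (g xs)))) < fst (prod_decode (fst (prod_decode (g xs)))) div 2 then 1 else 0)
  * (if even (fst (prod_decode (snd (prod_decode (g xs))))) then 1
             else if fst (prod_decode (snd (prod_decode (g xs)))) div 2 < snd (prod_decode (snd (prod_decode (g xs)))) then 1 else 0)
  + (if even (fst (prod_decode (fst (prod_decode (g xs))))) then (if fst (prod_decode (fst (prod_decode (g xs)))) div 2 < Suc (snd (prod_decode (fst (prod_decode (g xs))))) then 1 else 0) else 1)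
  * (if even (fst (prod_decode (snd (prod_decode (g xs))))) then (if Suc (snd (prod_decode (snd (prod_decode (g xs))))) < fst (prod_decode (snd (prod_decode (g xs)))) div 2 then 1 else 0) else 0))"
    by (intro PRF_all assms)
  then show ?thesis by (simp add: mt_def ltm1_def gtm1_def lt1_def gt1_def)
qed

lemma PRF_EK: "PRF 2 (\<lambda>xs. EK (xs!0) (nthc (xs!1)))"
proof -
  have "PRF 2 (\<lambda>xs. if even (xs!0) then cq (Fs (xs!0) (nthc (xs!1)))
     else if even (xs!0 div 2) then (if mt (xs!0 div 2 div 2) = 0 then Suc (xs!0 div 2 div 2) else 0)
     else (if mt (xs!0 div 2 div 2) = 0 then 0 else Suc (xs!0 div 2 div 2)))"
    by (intro PRF_all PRF_cq PRF_Fs PRF_mt) simp_all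
  then show ?thesis by (simp only: EK_def)
qed

lemma PRF_EH: "PRF 2 (\<lambda>xs. EH (xs!0) (nthc (xs!1)))"
proof -
  have "PRF 2 (\<lambda>xs. if even (fst (prod_decode (nthc (xs!1) 1))) then 1 else 0)"
    by (intro PRF_all) simp_all
  then show ?thesis by (simp add: EH_def)
qed

lemma Fs_loc: "(\<And>j. j < i \<Longrightarrow> f j = g j) \<Longrightarrow> Fs i f = Fs i g"
  by (induction i) (auto simp: Fs_def)

lemma comp_K: "computable_partial (\<lambda>p. Some (\<lambda>k. EK k p))"
proof (rule computable_generic[where Lf="\<lambda>l. l"])
  show "PRF 2 (\<lambda>xs. EK (xs!0) (nthc (xs!1)))" by (rule PRF_EK)
  show "PRF 1 (\<lambda>xs. xs!0)" by (intro PRF_intros) simp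
  show "EK i f = EK i g" if "i < l" "\<And>j. j < l \<Longrightarrow> f j = g j" for i f g l
    using that Fs_loc[of i f g] by (simp add: EK_def)
qed auto

lemma comp_H: "computable_partial (\<lambda>p. Some (\<lambda>k. EH k p))"
proof (rule computable_generic[where Lf="\<lambda>l. l - 1"])
  show "PRF 2 (\<lambda>xs. EH (xs!0) (nthc (xs!1)))" by (rule PRF_EH)
  show "PRF 1 (\<lambda>xs. xs!0 - 1)" by (intro PRF_intros) simp
  show "EH i f = EH i g" if "i < l - 1" "\<And>j. j < l \<Longrightarrow> f j = g j" for i f g l
    using that by (simp add: EH_def)
  show "\<exists>n::nat. k < n - 1" for k :: nat by (rule exI[of _ "k + 2"]) simp
qed auto



lemma int_decode_alt: "int_decode n = (if even n then int (n div 2) else - int (n div 2) - 1)"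
  by (simp add: int_decode_def sum_decode_def)

lemma nuQ_alt: "nuQ n = real_of_int (int_decode (fst (prod_decode n))) / real (Suc (snd (prod_decode n)))"
  by (simp add: nuQ_def split: prod.split)

lemma nuQ_nonneg_iff: "0 \<le> nuQ c \<longleftrightarrow> even (fst (prod_decode c))"
  by (auto simp: nuQ_alt int_decode_alt zero_le_divide_iff)

lemma ltm1_iff: "ltm1 a \<noteq> 0 \<longleftrightarrow> nuQ a < -1"
proof -
  obtain i j where pd: "prod_decode a = (i, j)" by force
  have "nuQ a < -1 \<longleftrightarrow> real_of_int (int_decode i) < - real (Suc j)"
    by (simp add: nuQ_alt pd divide_less_eq del: of_nat_Suc)
  also have "\<dots> \<longleftrightarrow> odd i \<and> j < i div 2"
    by (auto simp: int_decode_alt)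
  finally show ?thesis by (auto simp: ltm1_def pd)
qed

lemma gtm1_iff: "gtm1 b \<noteq> 0 \<longleftrightarrow> -1 < nuQ b"
proof -
  obtain i j where pd: "prod_decode b = (i, j)" by force
  have "-1 < nuQ b \<longleftrightarrow> - real (Suc j) < real_of_int (int_decode i)"
    by (simp add: nuQ_alt pd less_divide_eq del: of_nat_Suc)
  also have "\<dots> \<longleftrightarrow> even i \<or> i div 2 < j"
    by (auto simp: int_decode_alt)
  finally show ?thesis by (auto simp: gtm1_def pd)
qed

lemma lt1_iff: "lt1 a \<noteq> 0 \<longleftrightarrow> nuQ a < 1"
proof -
  obtain i j where pd: "prod_decode a = (i, j)" by force
  have "nuQ a < 1 \<longleftrightarrow> real_of_int (int_decode i) < real (Suc j)"
    by (simp add: nuQ_alt pd divide_less_eq del: of_nat_Suc)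
  also have "\<dots> \<longleftrightarrow> odd i \<or> i div 2 < Suc j"
    by (auto simp: int_decode_alt)
  finally show ?thesis by (auto simp: lt1_def pd)
qed

lemma gt1_iff: "gt1 b \<noteq> 0 \<longleftrightarrow> 1 < nuQ b"
proof -
  obtain i j where pd: "prod_decode b = (i, j)" by force
  have "1 < nuQ b \<longleftrightarrow> real (Suc j) < real_of_int (int_decode i)"
    by (simp add: nuQ_alt pd less_divide_eq del: of_nat_Suc)
  also have "\<dots> \<longleftrightarrow> even i \<and> Suc j < i div 2"
    by (auto simp: int_decode_alt)
  finally show ?thesis by (auto simp: gt1_def pd)
qed

lemma mt_iff: "mt k \<noteq> 0 \<longleftrightarrow> rat_interval k \<inter> {-1, 1} \<noteq> {}"
proof -
  obtain a b where pd: "prod_decode k = (a, b)" by force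
  have "rat_interval k \<inter> {-1, 1} \<noteq> {} \<longleftrightarrow> (nuQ a < -1 \<and> -1 < nuQ b) \<or> (nuQ a < 1 \<and> 1 < nuQ b)"
    by (auto simp: rat_interval_def pd)
  moreover have "mt k \<noteq> 0 \<longleftrightarrow> (ltm1 a \<noteq> 0 \<and> gtm1 b \<noteq> 0) \<or> (lt1 a \<noteq> 0 \<and> gt1 b \<noteq> 0)"
    by (simp add: mt_def pd)
  ultimately show ?thesis using ltm1_iff[of a] gtm1_iff[of b] lt1_iff[of a] gt1_iff[of b] by blast
qed

lemma nuQ_surj: assumes "r \<in> \<rat>" shows "\<exists>n. nuQ n = r"
proof -
  obtain a b where ab: "b > 0" "r = of_int a / of_int b" using Rats_cases'[OF assms] by metis
  have "nuQ (prod_encode (int_encode a, nat b - 1)) = r"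
    using ab by (simp add: nuQ_def)
  then show ?thesis by blast
qed

lemma nuQ_cq: "nuQ (cq (Suc j)) = (if even j then 1 else -1) * (1/2) ^ (j div 2)"
proof -
  have i2: "int_decode 2 = 1" and i1: "int_decode 1 = -1" by (simp_all add: int_decode_alt)
  have i1': "int_decode (Suc 0) = -1" by (simp add: int_decode_alt)
  have "real (Suc (2 ^ (j div 2) - 1)) = 2 ^ (j div 2)"
    by (simp add: Suc_diff_1)
  then show ?thesis
    by (auto simp: cq_def nuQ_def i2 i1 i1' power_one_over)
qed

lemma nuQ_0: "nuQ 0 = 0"
  by (simp add: nuQ_def prod_decode_0 int_decode_alt)

lemma Fs_zero: "(\<And>j. f j = 0) \<Longrightarrow> Fs i f = 0"
  by (induction i) (auto simp: Fs_def)

lemma Fs_one: "f j0 \<noteq> 0 \<Longrightarrow> (\<And>j. j \<noteq> j0 \<Longrightarrow> f j = 0) \<Longrightarrow> Fs i f = (if j0 < i then Suc j0 else 0)"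
  by (induction i) (auto simp: Fs_def less_Suc_eq)

lemma cauchy_unique: assumes "cauchy_name p x" "cauchy_name p y" shows "x = y"
proof (rule ccontr)
  assume "x \<noteq> y"
  then have d: "\<bar>x - y\<bar> / 2 > 0" by simp
  obtain n where n: "(1/2::real) ^ n < \<bar>x - y\<bar> / 2" using real_arch_pow_inv[OF d] by force
  have "\<bar>nuQ (p n) - x\<bar> \<le> (1/2) ^ n" "\<bar>nuQ (p n) - y\<bar> \<le> (1/2) ^ n"
    using assms unfolding cauchy_name_def by blast+
  moreover have "\<bar>x - y\<bar> \<le> \<bar>nuQ (p n) - x\<bar> + \<bar>nuQ (p n) - y\<bar>" by linarith
  ultimately have "\<bar>x - y\<bar> \<le> 2 * (1/2::real) ^ n" by simp
  with n show False by simp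
qed

lemma cauchy_rep_eq: "cauchy_name p x \<Longrightarrow> cauchy_rep p = Some x"
  unfolding cauchy_rep_def using cauchy_unique by (auto intro!: the_equality)

lemma cauchy_rep_Some: "cauchy_rep p = Some y \<Longrightarrow> cauchy_name p y"
  unfolding cauchy_rep_def using cauchy_unique
  by (auto split: if_splits intro: theI2)

lemma rep_closed_eq: "closed_name p A \<Longrightarrow> rep_closed p = Some A"
proof -
  assume a: "closed_name p A"
  have u: "B = A" if "closed_name p B" for B
  proof -
    have "- B = - A" using a that unfolding closed_name_def by simp
    then show ?thesis by simp
  qed
  have "(THE A. closed_name p A) = A" by (rule the_equality) (rule a, rule u)
  then show ?thesis unfolding rep_closed_def using a by auto
qed



abbreviation AA :: "real set" where "AA \<equiv> {-1, 1}"

lemma closed_part: "closed_name (seq_odd (\<lambda>k. EK k p)) AA"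
proof -
  let ?r = "seq_odd (\<lambda>k. EK k p)"
  have e: "seq_even ?r k = (if mt k = 0 then Suc k else 0)" for k
    by (simp add: seq_even_def seq_odd_def EK_def)
  have o: "seq_odd ?r k = (if mt k = 0 then 0 else Suc k)" for k
    by (simp add: seq_odd_def EK_def)
  have set1: "{k. \<exists>n. seq_odd ?r n = Suc k} = {k. rat_interval k \<inter> AA \<noteq> {}}"
    using mt_iff by (auto simp: o split: if_splits)
  have set2: "\<Union>{rat_interval k | k. \<exists>n. seq_even ?r n = Suc k} = - AA"
  proof
    show "\<Union>{rat_interval k | k. \<exists>n. seq_even ?r n = Suc k} \<subseteq> - AA"
      using mt_iff by (auto simp: e split: if_splits)
    show "- AA \<subseteq> \<Union>{rat_interval k | k. \<exists>n. seq_even ?r n = Suc k}"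
    proof
      fix z assume "z \<in> - AA"
      then have z1: "z \<noteq> 1" "z \<noteq> -1" by auto
      define d where "d = min \<bar>z - 1\<bar> \<bar>z + 1\<bar>"
      have dpos: "d > 0" using z1 by (auto simp: d_def)
      obtain qa where qa: "qa \<in> \<rat>" "z - d < qa" "qa < z"
        using Rats_dense_in_real[of "z - d" z] dpos by auto
      obtain qb where qb: "qb \<in> \<rat>" "z < qb" "qb < z + d"
        using Rats_dense_in_real[of z "z + d"] dpos by auto
      obtain na where na: "nuQ na = qa" using nuQ_surj qa(1) by blast
      obtain nb where nb: "nuQ nb = qb" using nuQ_surj qb(1) by blast
      define k where "k = prod_encode (na, nb)"
      have ri: "rat_interval k = {qa<..<qb}" by (simp add: rat_interval_def k_def na nb)
      have "rat_interval k \<inter> AA = {}"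
      proof -
        have "w \<noteq> 1 \<and> w \<noteq> -1" if "qa < w" "w < qb" for w
          using that qa qb unfolding d_def by auto
        then show ?thesis by (auto simp: ri)
      qed
      then have "mt k = 0" using mt_iff by blast
      then have "seq_even ?r k = Suc k" by (simp add: e)
      moreover have "z \<in> rat_interval k" using ri qa qb by simp
      ultimately show "z \<in> \<Union>{rat_interval k | k. \<exists>n. seq_even ?r n = Suc k}" by blast
    qed
  qed
  have "closed AA" by simp
  then show ?thesis unfolding closed_name_def using set1 set2 by blast
qed

definition xval :: "(nat \<Rightarrow> nat) \<Rightarrow> real" where
  "xval p = (if \<exists>j. p j \<noteq> 0 then (if even (SOME j. p j \<noteq> 0) then 1 else -1) * (1/2) ^ ((SOME j. p j \<noteq> 0) div 2) else 0)"

lemma cauchy_part: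
  assumes uniq: "\<And>j j'. p j \<noteq> 0 \<Longrightarrow> p j' \<noteq> 0 \<Longrightarrow> j = j'"
  shows "cauchy_name (seq_even (\<lambda>k. EK k p)) (xval p)"
  unfolding cauchy_name_def
proof
  fix n
  have se: "seq_even (\<lambda>k. EK k p) n = cq (Fs (2*n) p)" by (simp add: seq_even_def EK_def)
  show "\<bar>nuQ (seq_even (\<lambda>k. EK k p) n) - xval p\<bar> \<le> (1/2) ^ n"
  proof (cases "\<exists>j. p j \<noteq> 0")
    case False
    then have "Fs (2*n) p = 0" by (intro Fs_zero) auto
    then show ?thesis using False by (simp add: se xval_def cq_def nuQ_0)
  next
    case True
    then obtain j0 where j0: "p j0 \<noteq> 0" by auto
    have oth: "p j = 0" if "j \<noteq> j0" for j using uniq j0 that by blast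
    have some: "(SOME j. p j \<noteq> 0) = j0" using j0 uniq by (intro some_equality) auto
    have xv: "xval p = (if even j0 then 1 else -1) * (1/2) ^ (j0 div 2)"
      using True some by (simp add: xval_def)
    have F: "Fs (2*n) p = (if j0 < 2*n then Suc j0 else 0)" by (rule Fs_one[of p j0, OF j0 oth])
    show ?thesis
    proof (cases "j0 < 2*n")
      case True then show ?thesis by (simp add: se F xv nuQ_cq)
    next
      case False
      then have "n \<le> j0 div 2" by auto
      then have "(1/2::real) ^ (j0 div 2) \<le> (1/2) ^ n" by (rule power_decreasing) auto
      then show ?thesis using False by (simp add: se F xv cq_def nuQ_0 abs_mult)
    qed
  qed
qed

theorem proposition4p20:
  shows "sW_reducible (rep_prod rep_baire rep_baire) rep_nat LLPO
                      (rep_prod cauchy_rep rep_closed) cauchy_rep Proj_R"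
proof -
  define H where "H = (\<lambda>q::nat\<Rightarrow>nat. Some (\<lambda>k. EH k q))"
  define K where "K = (\<lambda>p::nat\<Rightarrow>nat. Some (\<lambda>k. EK k p))"
  have main: "\<forall>G. realizer (rep_prod cauchy_rep rep_closed) cauchy_rep Proj_R G \<longrightarrow>
      realizer (rep_prod rep_baire rep_baire) rep_nat LLPO (\<lambda>p. Option.bind (K p) (\<lambda>r. Option.bind (G r) H))"
  proof (intro allI impI)
    fix G assume G: "realizer (rep_prod cauchy_rep rep_closed) cauchy_rep Proj_R G"
    show "realizer (rep_prod rep_baire rep_baire) rep_nat LLPO (\<lambda>p. Option.bind (K p) (\<lambda>r. Option.bind (G r) H))"
      unfolding realizer_def
    proof (intro allI impI, elim conjE)
      fix p x assume dx: "rep_prod rep_baire rep_baire p = Some x" and ne: "LLPO x \<noteq> {}"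
      have x: "x = (seq_even p, seq_odd p)" using dx by (simp add: rep_prod_def rep_baire_def)
      have amo: "at_most_one_nonzero (seq_even p) (seq_odd p)"
        using ne x by (auto simp: LLPO_def split: if_splits)
      have pj: "p j = (if j mod 2 = 0 then seq_even p else seq_odd p) (j div 2)" for j
      proof (cases "even j")
        case True then show ?thesis using even_two_times_div_two[OF True] by (simp add: seq_even_def)
      next
        case False then show ?thesis using odd_two_times_div_two_succ[OF False] False by (simp add: seq_odd_def odd_iff_mod_2_eq_one)
      qed
      have uniq: "j = j'" if "p j \<noteq> 0" "p j' \<noteq> 0" for j j'
      proof -
        have "j mod 2 = j' mod 2 \<and> j div 2 = j' div 2"
          using amo unfolding at_most_one_nonzero_def
          apply -
          apply (erule allE[of _ "j mod 2"], erule allE[of _ "j div 2"], erule allE[of _ "j' mod 2"], erule allE[of _ "j' div 2"])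
          using that pj[of j] pj[of j'] by auto
        then show ?thesis by (metis div_mult_mod_eq)
      qed
      define r where "r = (\<lambda>k. EK k p)"
      have cr: "cauchy_rep (seq_even r) = Some (xval p)"
        unfolding r_def by (rule cauchy_rep_eq[OF cauchy_part]) (rule uniq)
      have rc: "rep_closed (seq_odd r) = Some AA"
        unfolding r_def by (rule rep_closed_eq[OF closed_part])
      have rr: "rep_prod cauchy_rep rep_closed r = Some (xval p, AA)"
        by (simp add: rep_prod_def cr rc)
      have ne2: "Proj_R (xval p, AA) \<noteq> {}"
      proof -
        obtain y where "y \<in> AA" "infdist (xval p) AA = dist (xval p) y"
          using infdist_attains_inf[of AA "xval p"] by auto
        then show ?thesis by (auto simp: Proj_R_def dist_real_def)
      qed
      obtain q y where Gr: "G r = Some q" and cy: "cauchy_rep q = Some y" and yP: "y \<in> Proj_R (xval p, AA)"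
        using G[unfolded realizer_def, rule_format, OF conjI[OF rr ne2]] by blast
      have yA: "y \<in> AA" and yd: "\<bar>xval p - y\<bar> = infdist (xval p) AA"
        using yP by (auto simp: Proj_R_def)
      have le1: "\<bar>xval p - y\<bar> \<le> \<bar>xval p - 1\<bar>" and le2: "\<bar>xval p - y\<bar> \<le> \<bar>xval p + 1\<bar>"
        using yd infdist_le[of 1 AA "xval p"] infdist_le[of "-1" AA "xval p"] by (auto simp: dist_real_def)
      have cq1: "\<bar>nuQ (q 1) - y\<bar> \<le> 1/2"
        using cauchy_rep_Some[OF cy] unfolding cauchy_name_def by (metis power_one_right)
      have comp: "Option.bind (K p) (\<lambda>r. Option.bind (G r) H) = Some (\<lambda>k. EH k q)"
        by (simp add: K_def H_def r_def[symmetric] Gr)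
      have "EH 0 q \<in> LLPO x"
      proof (cases "\<exists>j. p j \<noteq> 0")
        case False
        then have "seq_even p = (\<lambda>_. 0)" "seq_odd p = (\<lambda>_. 0)" by (auto simp: seq_even_def seq_odd_def)
        then show ?thesis by (simp add: x LLPO_def at_most_one_nonzero_def EH_def)
      next
        case True
        then obtain j0 where j0: "p j0 \<noteq> 0" by auto
        have some: "(SOME j. p j \<noteq> 0) = j0" using j0 uniq by (intro some_equality) auto
        have xv: "xval p = (if even j0 then 1 else -1) * (1/2) ^ (j0 div 2)"
          using True some by (simp add: xval_def)
        have pos: "(0::real) < (1/2) ^ (j0 div 2)" by simp
        show ?thesis
        proof (cases "even j0")
          case True
          then have xp: "xval p > 0" using xv pos by simp
          have "y = 1"
          proof (rule ccontr)
            assume "y \<noteq> 1" then have "y = -1" using yA by auto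
            then show False using le2 le1 xp by auto
          qed
          then have "nuQ (q 1) \<ge> 0" using cq1 by linarith
          then have a1: "EH 0 q = 1" by (simp add: EH_def nuQ_nonneg_iff[symmetric])
          have "seq_odd p = (\<lambda>_. 0)"
          proof
            fix m
            have "2 * m + 1 \<noteq> j0" using True by auto
            then show "seq_odd p m = 0" using uniq j0 by (auto simp: seq_odd_def)
          qed
          then show ?thesis using amo by (simp add: x LLPO_def a1)
        next
          case False
          then have xp: "xval p < 0" using xv pos by simp
          have "y = -1"
          proof (rule ccontr)
            assume "y \<noteq> -1" then have "y = 1" using yA by auto
            then show False using le2 le1 xp by auto
          qed
          then have "\<not> nuQ (q 1) \<ge> 0" using cq1 by linarith
          then have a1: "EH 0 q = 0" by (simp add: EH_def nuQ_nonneg_iff[symmetric])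
          have "seq_even p = (\<lambda>_. 0)"
          proof
            fix m
            have "2 * m \<noteq> j0" using False by auto
            then show "seq_even p m = 0" using uniq j0 by (auto simp: seq_even_def)
          qed
          then show ?thesis using amo by (simp add: x LLPO_def a1)
        qed
      qed
      then show "\<exists>q y. Option.bind (K p) (\<lambda>r. Option.bind (G r) H) = Some q \<and> rep_nat q = Some y \<and> y \<in> LLPO x"
        using comp by (simp add: rep_nat_def)
    qed
  qed
  have cH: "computable_partial H" unfolding H_def by (rule comp_H)
  have cK: "computable_partial K" unfolding K_def by (rule comp_K)
  show ?thesis unfolding sW_reducible_def using cH cK main by blast
qed

thm_deps proposition4p20

end
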